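(* Let $M\in\mathbb{R}^{d\times d}$ be a symmetric positive semidefinite matrix of rank $k$, and let $\sigma_{\min}(M)$ denote its smallest nonzero singular value. Let $\hat M=M+E$ be a symmetric matrix with $\epsilon:=\|E\|\le\sigma_{\min}(M)/4$. Let the truncated (top-$k$) SVDs of $M$ and $\hat M$ be $UDU^\top$ and $\hat U\hat D\hat U^\top$ respectively, where $U,\hat U\in\mathbb{R}^{d\times k}$ have orthonormal columns and $D,\hat D\in\mathbb{R}^{k\times k}$ are diagonal. Then there exists an orthogonal matrix $R\in\mathbb{R}^{k\times k}$ such that, setting $W:=UD^{-1/2}R$, $\hat W:=\hat U\hat D^{-1/2}$, $B:=UD^{1/2}R$, $\hat B:=\hat U\hat D^{1/2}$, $$\|W-\hat W\|\le\frac{5\epsilon}{\sigma_{\min}(M)^{3/2}},\qquad \|B^\top(W-\hat W)\|\le\frac{3\epsilon}{\sigma_{\min}(M)},\qquad \|B-\hat B\|\le\frac{3\epsilon\sqrt{\|M\|}}{\sigma_{\min}(M)}.$$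
   Context: $\|\cdot\|$ denotes the spectral (operator) norm of a matrix. *)

theory Defs
  imports "HOL-Analysis.Analysis"
begin

definition spec_norm :: "real^'n^'m \<Rightarrow> real" where
  "spec_norm A = onorm (\<lambda>x. A *v x)"

definition symmetric_mat :: "real^'n^'n \<Rightarrow> bool" where
  "symmetric_mat A \<longleftrightarrow> transpose A = A"

definition psd_mat :: "real^'n^'n \<Rightarrow> bool" where
  "psd_mat A \<longleftrightarrow> symmetric_mat A \<and> (\<forall>x. 0 \<le> x \<bullet> (A *v x))"

definition diagonal_mat :: "real^'n^'n \<Rightarrow> bool" where
  "diagonal_mat A \<longleftrightarrow> (\<forall>i j. i \<noteq> j \<longrightarrow> A $ i $ j = 0)"

definition singular_value :: "real^'n^'m \<Rightarrow> real \<Rightarrow> bool" where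
  "singular_value A s \<longleftrightarrow> 0 \<le> s \<and>
     (\<exists>v. v \<noteq> 0 \<and> (transpose A ** A) *v v = (s^2) *\<^sub>R v)"

definition sigma_min :: "real^'n^'m \<Rightarrow> real" where
  "sigma_min A = Inf {s. 0 < s \<and> singular_value A s}"

definition diag_powr :: "real^'k^'k \<Rightarrow> real \<Rightarrow> real^'k^'k" where
  "diag_powr D p = (\<chi> i j. if i = j then (D $ i $ i) powr p else 0)"

text \<open>(U, D) give a truncated top-k SVD  U D U^T  of the square matrix A:
  there is a full SVD A = P S Q^T (P, Q orthogonal, S diagonal with nonnegative
  entries), and an injective selection f of k indices carrying the k largest
  singular values, such that the selected left and right singular vectors agree
  (so the truncation has the form U D U^T), U consists of the selected columns of P,
  and D is the diagonal matrix of the selected singular values.\<close>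
definition trunc_svd :: "real^'d^'d \<Rightarrow> real^'k^'d \<Rightarrow> real^'k^'k \<Rightarrow> bool" where
  "trunc_svd A U D \<longleftrightarrow>
     (\<exists>P Q S f. orthogonal_matrix P \<and> orthogonal_matrix Q \<and> diagonal_mat S \<and>
        (\<forall>i. 0 \<le> S $ i $ i) \<and> A = P ** S ** transpose Q \<and> inj f \<and>
        (\<forall>i j. i \<notin> range f \<longrightarrow> S $ i $ i \<le> S $ f j $ f j) \<and>
        (\<forall>j r. Q $ r $ f j = P $ r $ f j) \<and>
        (\<forall>j r. U $ r $ j = P $ r $ f j) \<and>
        D = (\<chi> i j. if i = j then S $ f i $ f i else 0))"

end

theory Submission
  imports Defs
begin

lemma inner_mv: "(A *v x) \<bullet> (y::real^'m) = x \<bullet> (transpose A *v y)"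
  unfolding inner_vec_def matrix_vector_mult_def transpose_def
  apply (simp add: sum_distrib_left sum_distrib_right mult_ac)
  by (rule sum.swap)

lemma inner_mv_sym: "transpose G = G \<Longrightarrow> (G *v x) \<bullet> (y::real^'n) = x \<bullet> (G *v y)"
  by (metis inner_mv)

lemma isometry_norm:
  fixes U :: "real^'k^'d"
  assumes "transpose U ** U = mat 1"
  shows "norm (U *v x) = norm x"
proof -
  have "(U *v x) \<bullet> (U *v x) = x \<bullet> x"
    by (simp add: inner_mv matrix_vector_mul_assoc assms)
  then show ?thesis by (simp add: norm_eq_sqrt_inner)
qed

lemma spec_bound: "norm (A *v x) \<le> spec_norm A * norm x"
  unfolding spec_norm_def by (rule onorm[OF matrix_vector_mul_bounded_linear])

lemma spec_le: "(\<And>x. norm (A *v x) \<le> c * norm x) \<Longrightarrow> spec_norm A \<le> c"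
  unfolding spec_norm_def by (rule onorm_le)

lemma spec_nonneg: "0 \<le> spec_norm A"
  unfolding spec_norm_def by (rule onorm_pos_le[OF matrix_vector_mul_bounded_linear])

lemma sym_max_eig:
  fixes G :: "real^'n^'n"
  assumes sym: "transpose G = G" and S: "subspace S" and inv: "\<And>x. x \<in> S \<Longrightarrow> G *v x \<in> S"
    and ne: "x0 \<in> S" "x0 \<noteq> 0"
  shows "\<exists>v\<in>S. norm v = 1 \<and> G *v v = (v \<bullet> (G *v v)) *\<^sub>R v \<and>
            (\<forall>x\<in>S. x \<bullet> (G *v x) \<le> (v \<bullet> (G *v v)) * (norm x)^2)"
proof -
  define K where "K = S \<inter> sphere 0 1"
  have cK: "compact K" unfolding K_def
    by (intro closed_Int_compact closed_subspace S compact_sphere)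
  have "x0 /\<^sub>R norm x0 \<in> K" using ne S unfolding K_def
    by (auto simp: subspace_scale)
  hence neK: "K \<noteq> {}" by auto
  have cont: "continuous_on K (\<lambda>x. x \<bullet> (G *v x))"
    by (intro continuous_intros linear_continuous_on matrix_vector_mul_bounded_linear)
  obtain v where vK: "v \<in> K" and vmax: "\<And>y. y \<in> K \<Longrightarrow> y \<bullet> (G *v y) \<le> v \<bullet> (G *v v)"
    using continuous_attains_sup[OF cK neK cont] by blast
  define l where "l = v \<bullet> (G *v v)"
  have vS: "v \<in> S" and vn: "norm v = 1" using vK by (auto simp: K_def)
  have vv: "v \<bullet> v = 1" using vn by (simp add: norm_eq_sqrt_inner)
  have bound: "x \<bullet> (G *v x) \<le> l * (norm x)^2" if xS: "x \<in> S" for x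
  proof (cases "x = 0")
    case True then show ?thesis by simp
  next
    case False
    have "x /\<^sub>R norm x \<in> K" using xS S False unfolding K_def by (auto simp: subspace_scale)
    hence "(x /\<^sub>R norm x) \<bullet> (G *v (x /\<^sub>R norm x)) \<le> l" unfolding l_def by (rule vmax)
    hence "(x \<bullet> (G *v x)) / (norm x)^2 \<le> l"
      by (simp add: matrix_vector_mult_scaleR power2_eq_square divide_inverse mult_ac)
    with False show ?thesis by (simp add: divide_le_eq mult.commute)
  qed
  define w where "w = G *v v - l *\<^sub>R v"
  have wS: "w \<in> S" unfolding w_def using inv[OF vS] vS S
    by (simp add: subspace_diff subspace_scale)
  have wv: "v \<bullet> w = 0" unfolding w_def l_def by (simp add: inner_diff_right vv)
  have wGv: "w \<bullet> (G *v v) = w \<bullet> w"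
    unfolding w_def by (simp add: inner_diff_left inner_diff_right l_def inner_commute vv)
  have w0: "w = 0"
  proof (rule ccontr)
    assume "w \<noteq> 0"
    define a where "a = w \<bullet> w"
    have a0: "a > 0" using \<open>w \<noteq> 0\<close> unfolding a_def by simp
    define c where "c = w \<bullet> (G *v w) - l * a"
    have ineq: "2 * t * a + t^2 * c \<le> 0" for t
    proof -
      have "v + t *\<^sub>R w \<in> S" using vS wS S by (simp add: subspace_add subspace_scale)
      from bound[OF this]
      have "(v + t *\<^sub>R w) \<bullet> (G *v (v + t *\<^sub>R w)) \<le> l * (norm (v + t *\<^sub>R w))^2" .
      moreover have "(v + t *\<^sub>R w) \<bullet> (G *v (v + t *\<^sub>R w)) = l + 2 * t * a + t^2 * (w \<bullet> (G *v w))"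
      proof -
        have vw: "v \<bullet> (G *v w) = w \<bullet> (G *v v)"
          using inner_mv_sym[OF sym, of v w] by (simp add: inner_commute)
          have e1: "(v + t *\<^sub>R w) \<bullet> (G *v (v + t *\<^sub>R w)) = v \<bullet> (G *v v) + t * (v \<bullet> (G *v w)) + t * (w \<bullet> (G *v v)) + t * t * (w \<bullet> (G *v w))"
            by (simp add: matrix_vector_right_distrib matrix_vector_mult_scaleR inner_add_left inner_add_right algebra_simps)
          show ?thesis unfolding e1 vw wGv l_def a_def power2_eq_square
            by (simp add: algebra_simps)
      qed
      moreover have "(norm (v + t *\<^sub>R w))^2 = 1 + t^2 * a"
        unfolding power2_norm_eq_inner
        by (simp add: inner_add_left inner_add_right vv wv inner_commute a_def power2_eq_square)
      ultimately show ?thesis unfolding c_def by (simp add: algebra_simps)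
    qed
    define t where "t = a / (\<bar>c\<bar> + 1)"
    have t0: "t > 0" using a0 unfolding t_def by (simp add: add_pos_nonneg)
    have "2 * t * a + t^2 * c \<le> 0" by (rule ineq)
    hence "t * (2 * a + t * c) \<le> 0" by (simp add: algebra_simps power2_eq_square)
    hence "2 * a + t * c \<le> 0" using t0 by (simp add: mult_le_0_iff)
    moreover have "t * \<bar>c\<bar> < a"
    proof -
      have "t * \<bar>c\<bar> = a * (\<bar>c\<bar> / (\<bar>c\<bar> + 1))" unfolding t_def by simp
      also have "\<dots> < a * 1" using a0 by (intro mult_strict_left_mono) auto
      finally show ?thesis by simp
    qed
    moreover have "- (t * \<bar>c\<bar>) \<le> t * c"
    proof -
      have "t * (- \<bar>c\<bar>) \<le> t * c" using t0 by (intro mult_left_mono) auto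
      then show ?thesis by simp
    qed
    ultimately show False using a0 by linarith
  qed
  show ?thesis
    using vS vn w0 bound unfolding w_def l_def by (intro bexI[of _ v]) auto
qed


lemma eig_basis:
  fixes G :: "real^'n^'n"
  assumes sym: "transpose G = G"
  shows "subspace S \<Longrightarrow> (\<forall>x\<in>S. G *v x \<in> S) \<Longrightarrow> dim S = n \<Longrightarrow>
    \<exists>B. B \<subseteq> S \<and> finite B \<and> card B = n \<and> pairwise orthogonal B \<and>
        (\<forall>b\<in>B. norm b = 1 \<and> G *v b = (b \<bullet> (G *v b)) *\<^sub>R b)"
proof (induction n arbitrary: S)
  case 0
  then show ?case by (intro exI[of _ "{}"]) auto
next
  case (Suc n)
  have "\<not> S \<subseteq> {0}" using Suc.prems(3) dim_eq_0[of S] by auto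
  then obtain x0 where x0: "x0 \<in> S" "x0 \<noteq> 0" by auto
  obtain v where vS: "v \<in> S" and vn: "norm v = 1" and ev: "G *v v = (v \<bullet> (G *v v)) *\<^sub>R v"
    using sym_max_eig[OF sym Suc.prems(1) _ x0] Suc.prems(2) by blast
  define l where "l = v \<bullet> (G *v v)"
  have vv: "v \<bullet> v = 1" using vn by (simp add: norm_eq_sqrt_inner)
  define S' where "S' = {x\<in>S. v \<bullet> x = 0}"
  have sub': "subspace S'" using Suc.prems(1) unfolding S'_def subspace_def
    by (auto simp: inner_add_right)
  have inv': "\<forall>x\<in>S'. G *v x \<in> S'"
  proof
    fix x assume x: "x \<in> S'"
    have "v \<bullet> (G *v x) = (G *v v) \<bullet> x" using inner_mv_sym[OF sym, of v x] by simp
    also have "\<dots> = 0" using x ev unfolding S'_def by (simp add: l_def[symmetric])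
    finally show "G *v x \<in> S'" using x Suc.prems(2) unfolding S'_def by auto
  qed
  have vnot: "v \<notin> span S'"
  proof
    assume "v \<in> span S'"
    hence "v \<in> S'" using sub' by (metis span_eq_iff)
    thus False using vv unfolding S'_def by simp
  qed
  have span_eq: "span (insert v S') = S"
  proof (rule span_subspace)
    show "insert v S' \<subseteq> S" using vS unfolding S'_def by auto
    show "subspace S" by (rule Suc.prems(1))
    show "S \<subseteq> span (insert v S')"
    proof
      fix x assume x: "x \<in> S"
      have "x - (v \<bullet> x) *\<^sub>R v \<in> S'" unfolding S'_def using x vS Suc.prems(1)
        by (auto simp: subspace_diff subspace_scale inner_diff_right vv)
      hence "x - (v \<bullet> x) *\<^sub>R v \<in> span (insert v S')" by (meson span_base subsetD subset_insertI)
      moreover have "(v \<bullet> x) *\<^sub>R v \<in> span (insert v S')" by (simp add: span_base span_scale)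
      ultimately have "(x - (v \<bullet> x) *\<^sub>R v) + (v \<bullet> x) *\<^sub>R v \<in> span (insert v S')"
        by (rule span_add)
      then show "x \<in> span (insert v S')" by simp
    qed
  qed
  have "dim S = dim S' + 1"
    using dim_span[of "insert v S'"] span_eq dim_insert[of v S'] vnot by simp
  hence dS': "dim S' = n" using Suc.prems(3) by simp
  obtain B' where B': "B' \<subseteq> S'" "finite B'" "card B' = n" "pairwise orthogonal B'"
    "\<forall>b\<in>B'. norm b = 1 \<and> G *v b = (b \<bullet> (G *v b)) *\<^sub>R b"
    using Suc.IH[OF sub' inv' dS'] by blast
  have vB': "v \<notin> B'" using B'(1) vv unfolding S'_def by auto
  show ?case
  proof (intro exI[of _ "insert v B'"] conjI)
    show "insert v B' \<subseteq> S" using B'(1) vS unfolding S'_def by auto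
    show "finite (insert v B')" using B'(2) by simp
    show "card (insert v B') = Suc n" using B'(2,3) vB' by simp
    show "pairwise orthogonal (insert v B')"
      using B'(1,4) unfolding pairwise_insert S'_def orthogonal_def
      by (auto simp: inner_commute)
    show "\<forall>b\<in>insert v B'. norm b = 1 \<and> G *v b = (b \<bullet> (G *v b)) *\<^sub>R b"
      using B'(5) vn ev by auto
  qed
qed

definition diagm :: "('n::finite \<Rightarrow> real) \<Rightarrow> real^'n^'n" where
  "diagm l = (\<chi> i j. if i = j then l i else 0)"

lemma spectral:
  fixes G :: "real^'n^'n"
  assumes sym: "transpose G = G"
  shows "\<exists>V l. orthogonal_matrix V \<and> (\<forall>i. G *v column i V = l i *\<^sub>R column i V) \<and>
     G = V ** diagm l ** transpose V"
proof -
  have "dim (UNIV :: (real^'n) set) = CARD('n)" by simp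
  then obtain B where B: "finite B" "card B = CARD('n)" "pairwise orthogonal B"
     "\<forall>b\<in>B. norm b = 1 \<and> G *v b = (b \<bullet> (G *v b)) *\<^sub>R b"
    using eig_basis[OF sym, of UNIV "CARD('n)"] by auto
  obtain h where h: "bij_betw h (UNIV::'n set) B"
    using finite_same_card_bij[of "UNIV::'n set" B] B(1,2) by auto
  have hB: "h i \<in> B" for i using h by (auto simp: bij_betw_def)
  have hinj: "h i = h j \<Longrightarrow> i = j" for i j using h by (auto simp: bij_betw_def inj_on_def)
  define V :: "real^'n^'n" where "V = (\<chi> r i. h i $ r)"
  define l where "l i = h i \<bullet> (G *v h i)" for i
  have col: "column i V = h i" for i unfolding V_def column_def by (simp add: vec_eq_iff)
  have hh: "h i \<bullet> h j = (if i = j then 1 else 0)" for i j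
  proof (cases "i = j")
    case True then show ?thesis using B(4) hB[of i] by (simp add: norm_eq_sqrt_inner)
  next
    case False
    then have "h i \<noteq> h j" using hinj by blast
    then show ?thesis using B(3) hB[of i] hB[of j] False unfolding pairwise_def orthogonal_def by auto
  qed
  have VtV: "transpose V ** V = mat 1"
  proof -
    have "(transpose V ** V) $ i $ j = h i \<bullet> h j" for i j
      unfolding matrix_matrix_mult_def transpose_def V_def inner_vec_def by simp
    then show ?thesis by (simp add: vec_eq_iff hh mat_def)
  qed
  hence VVt: "V ** transpose V = mat 1" using matrix_left_right_inverse by blast
  have ev: "G *v h i = l i *\<^sub>R h i" for i using B(4) hB[of i] unfolding l_def by auto
  have GV: "G ** V = V ** diagm l"
  proof -
    have "(G ** V) $ r $ i = (G *v h i) $ r" for r i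
      unfolding matrix_matrix_mult_def matrix_vector_mult_def V_def by simp
    moreover have "(V ** diagm l) $ r $ i = l i * h i $ r" for r i
      unfolding matrix_matrix_mult_def diagm_def V_def
      by (simp add: if_distrib[of "\<lambda>x. _ * x"] sum.delta' cong: if_cong)
    ultimately show ?thesis by (simp add: vec_eq_iff ev)
  qed
  have "G = G ** V ** transpose V" by (simp add: matrix_mul_assoc[symmetric] VVt)
  also have "\<dots> = V ** diagm l ** transpose V" by (simp add: GV)
  finally have "G = V ** diagm l ** transpose V" .
  moreover have "orthogonal_matrix V" unfolding orthogonal_matrix_def using VtV VVt by simp
  ultimately show ?thesis using ev col by metis
qed

lemma ifz_mult: "(if P then a else (0::real)) * y = (if P then a * y else 0)" by simp
lemma mult_ifz: "y * (if P then a else (0::real)) = (if P then y * a else 0)" by simp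
lemma diagm_mv: "diagm a *v x = (\<chi> i. a i * x $ i)"
  unfolding diagm_def matrix_vector_mult_def
  by (simp add: vec_eq_iff ifz_mult)
lemma diagm_mult: "diagm a ** diagm b = diagm (\<lambda>i. a i * b i)"
  unfolding diagm_def matrix_matrix_mult_def
  by (simp add: vec_eq_iff ifz_mult mult_ifz)
lemma diagm_transpose: "transpose (diagm a) = diagm a"
  unfolding diagm_def transpose_def by (simp add: vec_eq_iff)
lemma diagm_one: "diagm (\<lambda>_. 1) = mat 1"
  unfolding diagm_def mat_def by (simp add: vec_eq_iff)
lemma diagm_bound:
  assumes "\<And>i. \<bar>a i\<bar> \<le> c"
  shows "norm (diagm a *v x) \<le> c * norm x"
proof -
  have c0: "0 \<le> c" using assms[of undefined] by linarith
  have "(diagm a *v x) \<bullet> (diagm a *v x) \<le> (c *\<^sub>R x) \<bullet> (c *\<^sub>R x)"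
    unfolding diagm_mv inner_vec_def
  proof (rule sum_mono, goal_cases)
    case (1 i)
    have "(a i)^2 \<le> c^2" using assms[of i] c0 by (metis abs_le_square_iff abs_of_nonneg)
    hence "(a i)^2 * (x$i)^2 \<le> c^2 * (x$i)^2" by (intro mult_right_mono) auto
    thus ?case
      by (simp add: power2_eq_square mult_ac)
  qed
  hence "norm (diagm a *v x) \<le> norm (c *\<^sub>R x)" by (simp only: norm_le)
  thus ?thesis using c0 by simp
qed

lemma rank_diagm: "rank (diagm s :: real^'n^'n) = card {i. s i \<noteq> 0}"
proof -
  define N where "N = {i. s i \<noteq> 0}"
  define A :: "(real^'n) set" where "A = (\<lambda>i. axis i 1) ` N"
  have finA: "finite A" unfolding A_def by simp
  have cardA: "card A = card N" unfolding A_def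
    by (rule card_image) (auto simp: inj_on_def axis_eq_axis)
  have sub1: "range ((*v) (diagm s)) \<subseteq> span A"
  proof
    fix y assume "y \<in> range ((*v) (diagm s))"
    then obtain x where y: "y = diagm s *v x" by auto
    have "y = (\<Sum>i\<in>N. (s i * x$i) *\<^sub>R axis i 1)"
      unfolding y diagm_mv
      by (auto simp: vec_eq_iff sum_component axis_def N_def mult_ifz)
    also have "\<dots> \<in> span A"
      by (intro span_sum span_scale span_base) (auto simp: A_def)
    finally show "y \<in> span A" .
  qed
  have sub2: "A \<subseteq> range ((*v) (diagm s))"
  proof
    fix y assume "y \<in> A"
    then obtain i where i: "i \<in> N" "y = axis i 1" unfolding A_def by auto
    have "diagm s *v axis i (1 / s i) = y"
      using i unfolding N_def by (simp add: diagm_mv vec_eq_iff axis_def)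
    thus "y \<in> range ((*v) (diagm s))" by (metis rangeI)
  qed
  have indA: "independent A"
    by (rule independent_mono[OF independent_Basis]) (auto simp: A_def axis_in_Basis_iff)
  have "dim (range ((*v) (diagm s))) \<le> card A" by (rule dim_le_card[OF sub1 finA])
  moreover have "card A \<le> dim (range ((*v) (diagm s)))" by (rule independent_card_le_dim[OF sub2 indA])
  ultimately show ?thesis unfolding rank_dim_range cardA N_def by simp
qed

lemma diag_eq: "diagonal_mat S \<Longrightarrow> S = diagm (\<lambda>i. S$i$i)"
  unfolding diagonal_mat_def diagm_def by (auto simp: vec_eq_iff)

lemma orth_cols: "orthogonal_matrix P \<Longrightarrow> (\<Sum>r\<in>UNIV. P$r$i * P$r$j) = (if i = j then 1 else (0::real))"
proof -
  assume "orthogonal_matrix P"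
  hence "transpose P ** P = mat 1" unfolding orthogonal_matrix_def by simp
  hence "(transpose P ** P) $ i $ j = mat 1 $ i $ j" by simp
  thus ?thesis unfolding matrix_matrix_mult_def transpose_def mat_def by simp
qed

lemma diag_bound2:
  assumes "\<And>i. x$i = 0 \<or> \<bar>a i\<bar> \<le> c" and c0: "0 \<le> c"
  shows "norm (diagm a *v x) \<le> c * norm x"
proof -
  have "(diagm a *v x) \<bullet> (diagm a *v x) \<le> (c *\<^sub>R x) \<bullet> (c *\<^sub>R x)"
    unfolding diagm_mv inner_vec_def
  proof (rule sum_mono, goal_cases)
    case (1 i)
    show ?case
    proof (cases "x$i = 0")
      case True then show ?thesis by simp
    next
      case False
      hence "\<bar>a i\<bar> \<le> c" using assms(1)[of i] by auto
      hence "(a i)^2 \<le> c^2" using c0 by (metis abs_le_square_iff abs_of_nonneg)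
      hence "(a i)^2 * (x$i)^2 \<le> c^2 * (x$i)^2" by (intro mult_right_mono) auto
      thus ?thesis by (simp add: power2_eq_square mult_ac)
    qed
  qed
  hence "norm (diagm a *v x) \<le> norm (c *\<^sub>R x)" by (simp only: norm_le)
  thus ?thesis using c0 by simp
qed

lemma polar:
  fixes H :: "real^'k^'k"
  assumes lo: "\<And>x. (1 - e) * (norm x)^2 \<le> (norm (H *v x))^2"
    and hi: "\<And>x. norm (H *v x) \<le> norm x"
    and e: "0 \<le> e" "e < 1"
  shows "\<exists>R. orthogonal_matrix R \<and> (\<forall>x. norm ((R - H) *v x) \<le> e * norm x)"
proof -
  define G where "G = transpose H ** H"
  have symG: "transpose G = G" unfolding G_def by (simp add: matrix_transpose_mul)
  obtain V l where V: "orthogonal_matrix V" and ev: "\<And>i. G *v column i V = l i *\<^sub>R column i V"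
    and Gdec: "G = V ** diagm l ** transpose V"
    using spectral[OF symG] by blast
  have VtV: "transpose V ** V = mat 1" and VVt: "V ** transpose V = mat 1"
    using V unfolding orthogonal_matrix_def by auto
  have VtV': "X ** transpose V ** V = X" for X :: "real^'k^'k"
    by (metis matrix_mul_assoc VtV matrix_mul_rid)
  have ncol: "norm (column i V) = 1" for i using V orthogonal_matrix_orthonormal_columns by blast
  have lH: "l i = (norm (H *v column i V))^2" for i
  proof -
    have "column i V \<bullet> (G *v column i V) = l i"
      using ev[of i] ncol[of i] by (simp add: power2_norm_eq_inner[symmetric])
    moreover have "column i V \<bullet> (G *v column i V) = (H *v column i V) \<bullet> (H *v column i V)"
      unfolding G_def by (simp add: inner_mv matrix_vector_mul_assoc[symmetric])
    ultimately show ?thesis by (simp add: power2_norm_eq_inner)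
  qed
  have lbd: "1 - e \<le> l i" "l i \<le> 1" for i
    using lo[of "column i V"] hi[of "column i V"] ncol[of i] lH[of i]
    by (auto simp: power_le_one)
  have lpos: "0 < l i" for i using lbd(1)[of i] e by linarith
  define N where "N = V ** diagm (\<lambda>i. l i powr (-1/2)) ** transpose V"
  define R where "R = H ** N"
  have NtN: "transpose N = N" unfolding N_def
    by (simp add: matrix_transpose_mul diagm_transpose matrix_mul_assoc)
  have "transpose R ** R = N ** G ** N"
    unfolding R_def G_def by (simp add: matrix_transpose_mul NtN matrix_mul_assoc)
  also have "\<dots> = V ** (diagm (\<lambda>i. l i powr (-1/2)) ** diagm l ** diagm (\<lambda>i. l i powr (-1/2))) ** transpose V"
    unfolding N_def Gdec by (simp add: matrix_mul_assoc VtV')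
  also have "diagm (\<lambda>i. l i powr (-1/2)) ** diagm l ** diagm (\<lambda>i. l i powr (-1/2)) = mat 1"
  proof -
    have "l i powr (-1/2) * l i * l i powr (-1/2) = 1" for i
    proof -
      have "l i powr (-1/2) * l i powr (-1/2) = l i powr (-1)"
        by (simp add: powr_add[symmetric])
      thus ?thesis using lpos[of i] by (simp add: powr_minus field_simps)
    qed
    thus ?thesis by (simp add: diagm_mult diagm_one[symmetric])
  qed
  finally have RtR: "transpose R ** R = mat 1" by (simp add: VVt)
  hence orth: "orthogonal_matrix R"
    unfolding orthogonal_matrix_def using matrix_left_right_inverse by blast
  have Hfac: "H = R ** (V ** diagm (\<lambda>i. sqrt (l i)) ** transpose V)"
  proof -
    have "diagm (\<lambda>i. l i powr (-1/2)) ** diagm (\<lambda>i. sqrt (l i)) = mat 1"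
    proof -
      have "l i powr (-1/2) * sqrt (l i) = 1" for i
      proof -
        have "sqrt (l i) = l i powr (1/2)" using lpos[of i] by (simp add: powr_half_sqrt)
        hence "l i powr (-1/2) * sqrt (l i) = l i powr (-1/2 + 1/2)" by (simp only: powr_add)
        thus ?thesis using lpos[of i] by simp
      qed
      thus ?thesis by (simp add: diagm_mult diagm_one[symmetric])
    qed
    moreover have "N ** (V ** diagm (\<lambda>i. sqrt (l i)) ** transpose V) =
        V ** (diagm (\<lambda>i. l i powr (-1/2)) ** diagm (\<lambda>i. sqrt (l i))) ** transpose V"
      unfolding N_def by (simp add: matrix_mul_assoc VtV')
    ultimately have "N ** (V ** diagm (\<lambda>i. sqrt (l i)) ** transpose V) = mat 1"
      by (simp add: VVt)
    thus ?thesis unfolding R_def by (simp add: matrix_mul_assoc[symmetric])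
  qed
  have "norm ((R - H) *v x) \<le> e * norm x" for x
  proof -
    define y where "y = transpose V *v x"
    have xy: "x = V *v y" unfolding y_def by (simp only: matrix_vector_mul_assoc VVt matrix_vector_mul_lid)
    have Hx: "H *v x = R *v (V *v (diagm (\<lambda>i. sqrt (l i)) *v y))"
      unfolding y_def by (subst Hfac) (simp only: matrix_vector_mul_assoc matrix_mul_assoc)
    have "(R - H) *v x = R *v (V *v (y - diagm (\<lambda>i. sqrt (l i)) *v y))"
      by (simp only: matrix_vector_mult_diff_rdistrib matrix_vector_mult_diff_distrib Hx)
         (simp only: xy[symmetric])
    also have "y - diagm (\<lambda>i. sqrt (l i)) *v y = diagm (\<lambda>i. 1 - sqrt (l i)) *v y"
      by (simp add: diagm_mv vec_eq_iff algebra_simps)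
    finally have "norm ((R - H) *v x) = norm (diagm (\<lambda>i. 1 - sqrt (l i)) *v y)"
      using isometry_norm[OF RtR] isometry_norm[OF VtV] by simp
    also have "\<dots> \<le> e * norm y"
    proof (rule diagm_bound)
      fix i
      have "sqrt (l i) \<le> 1" using lbd(2)[of i] by simp
      moreover have "l i \<le> sqrt (l i)"
      proof -
        have "l i = sqrt (l i) * sqrt (l i)" using lpos[of i] by simp
        also have "\<dots> \<le> sqrt (l i) * 1" using \<open>sqrt (l i) \<le> 1\<close> lpos[of i] by (intro mult_left_mono) auto
        finally show ?thesis by simp
      qed
      ultimately show "\<bar>1 - sqrt (l i)\<bar> \<le> e" using lbd(1)[of i] by linarith
    qed
    also have "norm y = norm x" unfolding xy using isometry_norm[OF VtV] by simp
    finally show ?thesis .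
  qed
  thus ?thesis using orth by blast
qed

lemma diag_quad:
  assumes "\<And>i. c \<le> a i"
  shows "c * (x \<bullet> x) \<le> x \<bullet> (diagm a *v x)"
  unfolding diagm_mv inner_vec_def sum_distrib_left
proof (rule sum_mono, goal_cases)
  case (1 i)
  have "c * (x$i * x$i) \<le> a i * (x$i * x$i)" using assms[of i] by (intro mult_right_mono) auto
  thus ?case by (simp add: mult_ac)
qed

lemma sylvester:
  fixes Z :: "real^'k^'k"
  assumes a: "\<And>i. \<alpha> \<le> a i" and b: "\<And>j. 0 \<le> b j" and al: "0 < \<alpha>"
  shows "spec_norm Z \<le> spec_norm (diagm a ** Z + Z ** diagm b) / \<alpha>"
proof -
  define C where "C = diagm a ** Z + Z ** diagm b"
  define G where "G = transpose Z ** Z"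
  have symG: "transpose G = G" unfolding G_def by (simp add: matrix_transpose_mul)
  have ax: "axis undefined (1::real) \<noteq> (0::real^'k)" by (simp add: axis_eq_0_iff)
  obtain v where vn: "norm v = 1" and ev: "G *v v = (v \<bullet> (G *v v)) *\<^sub>R v"
     and mx: "\<And>x. x \<bullet> (G *v x) \<le> (v \<bullet> (G *v v)) * (norm x)^2"
    using sym_max_eig[OF symG subspace_UNIV _ _ ax] by blast
  have quadG: "x \<bullet> (G *v x) = (norm (Z *v x))^2" for x
    unfolding G_def by (simp add: power2_norm_eq_inner inner_mv matrix_vector_mul_assoc[symmetric])
  define \<mu> where "\<mu> = norm (Z *v v)"
  have lam: "v \<bullet> (G *v v) = \<mu>^2" unfolding \<mu>_def by (rule quadG)
  have zb: "norm (Z *v x) \<le> \<mu> * norm x" for x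
  proof -
    have "(norm (Z *v x))^2 \<le> (\<mu> * norm x)^2"
      using mx[of x] unfolding quadG lam by (simp add: power_mult_distrib \<mu>_def)
    thus ?thesis using \<mu>_def by (simp add: power2_le_iff_abs_le)
  qed
  hence sZ: "spec_norm Z \<le> \<mu>" by (rule spec_le)
  have C0: "0 \<le> spec_norm C" by (rule spec_nonneg)
  show ?thesis
  proof (cases "\<mu> = 0")
    case True
    have "0 \<le> spec_norm C / \<alpha>" using C0 al by simp
    then show ?thesis using sZ True unfolding C_def by linarith
  next
    case False
    hence mpos: "\<mu> > 0" unfolding \<mu>_def by simp
    define u where "u = (1/\<mu>) *\<^sub>R (Z *v v)"
    have un: "norm u = 1" unfolding u_def using mpos by (simp add: \<mu>_def)
    have Ztu: "transpose Z *v u = \<mu> *\<^sub>R v"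
    proof -
      have "transpose Z *v u = (1/\<mu>) *\<^sub>R (G *v v)"
        unfolding u_def G_def by (simp add: matrix_vector_mult_scaleR matrix_vector_mul_assoc)
      also have "\<dots> = \<mu> *\<^sub>R v" using ev mpos unfolding lam by (simp add: power2_eq_square)
      finally show ?thesis .
    qed
    have Zv: "Z *v v = \<mu> *\<^sub>R u" unfolding u_def using mpos by simp
    have "u \<bullet> (C *v v) = \<mu> * (u \<bullet> (diagm a *v u)) + \<mu> * (v \<bullet> (diagm b *v v))"
    proof -
      have "u \<bullet> (C *v v) = u \<bullet> (diagm a *v (Z *v v)) + u \<bullet> (Z *v (diagm b *v v))"
        unfolding C_def by (simp add: matrix_vector_mult_add_rdistrib inner_add_right
            matrix_vector_mul_assoc)
      also have "u \<bullet> (Z *v (diagm b *v v)) = (transpose Z *v u) \<bullet> (diagm b *v v)"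
        by (metis inner_mv inner_commute)
      finally show ?thesis unfolding Ztu Zv by (simp add: matrix_vector_mult_scaleR)
    qed
    moreover have "\<alpha> \<le> u \<bullet> (diagm a *v u)" using diag_quad[of \<alpha> a u, OF a] un
      by (simp add: norm_eq_sqrt_inner)
    moreover have "0 \<le> v \<bullet> (diagm b *v v)" using diag_quad[of 0 b v, OF b] by simp
    ultimately have "\<mu> * \<alpha> \<le> u \<bullet> (C *v v)" using mpos
      by (smt (verit) mult_left_mono mult_nonneg_nonneg)
    also have "\<dots> \<le> norm u * norm (C *v v)" by (rule Cauchy_Schwarz_ineq2[THEN order_trans[OF abs_ge_self]])
    also have "\<dots> \<le> spec_norm C" using spec_bound[of C v] un vn by simp
    finally have "\<mu> \<le> spec_norm C / \<alpha>" using al by (simp add: field_simps)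
    then show ?thesis using sZ unfolding C_def by linarith
  qed
qed

lemma tsvd_props:
  fixes A :: "real^'d^'d" and U :: "real^'k^'d" and D :: "real^'k^'k"
  assumes "trunc_svd A U D"
  shows "transpose U ** U = mat 1"
    and "A ** U = U ** D"
    and "D = diagm (\<lambda>j. D$j$j)"
    and "\<And>j. 0 \<le> D$j$j"
    and "\<And>j0 x. (\<And>j. j \<noteq> j0 \<Longrightarrow> column j U \<bullet> x = 0) \<Longrightarrow> norm (A *v x) \<le> D$j0$j0 * norm x"
proof -
  obtain P Q S f where P: "orthogonal_matrix P" and Q: "orthogonal_matrix Q"
    and Sd: "diagonal_mat S" and Snn: "\<And>i. 0 \<le> S $ i $ i" and A: "A = P ** S ** transpose Q"
    and f: "inj f" and top: "\<And>i j. i \<notin> range f \<Longrightarrow> S $ i $ i \<le> S $ f j $ f j"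
    and QP: "\<And>j r. Q $ r $ f j = P $ r $ f j" and UP: "\<And>j r. U $ r $ j = P $ r $ f j"
    and D: "D = (\<chi> i j. if i = j then S $ f i $ f i else 0)"
    using assms unfolding trunc_svd_def by blast
  define s where "s i = S$i$i" for i
  have Ss: "S = diagm s" unfolding s_def by (rule diag_eq[OF Sd])
  have Dd: "D = diagm (\<lambda>j. s (f j))" unfolding D diagm_def s_def by simp
  have Djj: "D$j$j = s (f j)" for j unfolding Dd diagm_def by simp
  show "D = diagm (\<lambda>j. D$j$j)" unfolding Djj by (rule Dd)
  show "\<And>j. 0 \<le> D$j$j" unfolding Djj s_def by (rule Snn)
  have finj: "f i = f j \<longleftrightarrow> i = j" for i j using f by (auto simp: inj_def)
  show "transpose U ** U = mat 1"
  proof -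
    have "(transpose U ** U) $ i $ j = mat 1 $ i $ j" for i j
      unfolding matrix_matrix_mult_def transpose_def
      by (simp add: UP orth_cols[OF P] finj mat_def)
    thus ?thesis by (simp add: vec_eq_iff)
  qed
  have QtU: "transpose Q ** U = (\<chi> i j. if i = f j then 1 else 0)"
  proof -
    have "(transpose Q ** U) $ i $ j = (if i = f j then 1 else 0)" for i j
      unfolding matrix_matrix_mult_def transpose_def
      by (simp add: UP QP[symmetric] orth_cols[OF Q])
    thus ?thesis by (simp add: vec_eq_iff)
  qed
  show "A ** U = U ** D"
  proof -
    have "A ** U = P ** (S ** (transpose Q ** U))" unfolding A by (simp add: matrix_mul_assoc)
    also have "S ** (transpose Q ** U) = (\<chi> i j. if i = f j then s (f j) else 0)"
      unfolding QtU Ss by (simp add: matrix_matrix_mult_def diagm_def vec_eq_iff ifz_mult mult_ifz)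
    finally have "A ** U = P ** (\<chi> i j. if i = f j then s (f j) else 0)" .
    moreover have "(P ** (\<chi> i j. if i = f j then s (f j) else 0)) $ r $ j = (U ** D) $ r $ j" for r j
      by (simp add: matrix_matrix_mult_def Dd diagm_def UP mult_ifz)
    ultimately show ?thesis by (simp add: vec_eq_iff)
  qed
  fix j0 x
  assume orth: "\<And>j. j \<noteq> j0 \<Longrightarrow> column j U \<bullet> x = 0"
  define y where "y = transpose Q *v x"
  have yf: "y $ f j = 0" if "j \<noteq> j0" for j
  proof -
    have "y $ f j = column j U \<bullet> x"
      unfolding y_def column_def inner_vec_def matrix_vector_mult_def transpose_def
      by (simp add: UP QP)
    thus ?thesis using orth[OF that] by simp
  qed
  have Ax: "A *v x = P *v (diagm s *v y)"
    unfolding A y_def Ss by (simp only: matrix_vector_mul_assoc matrix_mul_assoc)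
  have PtP: "transpose P ** P = mat 1" using P unfolding orthogonal_matrix_def by simp
  have QQt: "transpose (transpose Q) ** transpose Q = mat 1"
    using Q unfolding orthogonal_matrix_def by simp
  have c0: "0 \<le> s (f j0)" unfolding s_def by (rule Snn)
  have "norm (A *v x) = norm (diagm s *v y)" unfolding Ax by (rule isometry_norm[OF PtP])
  also have "\<dots> \<le> s (f j0) * norm y"
  proof (rule diag_bound2[OF _ c0])
    fix i
    show "y $ i = 0 \<or> \<bar>s i\<bar> \<le> s (f j0)"
    proof (cases "i \<in> range f")
      case True
      then obtain j where j: "i = f j" by auto
      show ?thesis
      proof (cases "j = j0")
        case True then show ?thesis using j c0 by simp
      next
        case False then show ?thesis using yf j by simp
      qed
    next
      case False
      then show ?thesis using top[OF False, of j0] Snn[of i] unfolding s_def by simp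
    qed
  qed
  also have "norm y = norm x" unfolding y_def by (rule isometry_norm[OF QQt])
  finally show "norm (A *v x) \<le> D$j0$j0 * norm x" unfolding Djj .
qed

lemma tsvd_rank:
  fixes M :: "real^'d^'d" and U :: "real^'k^'d" and D :: "real^'k^'k"
  assumes "trunc_svd M U D" and rk: "rank M = CARD('k)"
  shows "M = U ** D ** transpose U" and "\<And>j. 0 < D$j$j"
proof -
  obtain P Q S f where P: "orthogonal_matrix P" and Q: "orthogonal_matrix Q"
    and Sd: "diagonal_mat S" and Snn: "\<And>i. 0 \<le> S $ i $ i" and A: "M = P ** S ** transpose Q"
    and f: "inj f" and top: "\<And>i j. i \<notin> range f \<Longrightarrow> S $ i $ i \<le> S $ f j $ f j"
    and QP: "\<And>j r. Q $ r $ f j = P $ r $ f j" and UP: "\<And>j r. U $ r $ j = P $ r $ f j"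
    and D: "D = (\<chi> i j. if i = j then S $ f i $ f i else 0)"
    using assms(1) unfolding trunc_svd_def by blast
  define s where "s i = S$i$i" for i
  have Ss: "S = diagm s" unfolding s_def by (rule diag_eq[OF Sd])
  have Djj: "D$j$j = s (f j)" for j unfolding D s_def by simp
  have Dd: "D = diagm (\<lambda>j. s (f j))" unfolding D diagm_def s_def by simp
  have PtP: "transpose P ** P = mat 1" and QtQ: "transpose Q ** Q = mat 1"
    and QQt: "Q ** transpose Q = mat 1"
    using P Q unfolding orthogonal_matrix_def by auto
  have "rank M \<le> rank S"
    unfolding A by (meson order_trans rank_mul_le_left rank_mul_le_right)
  moreover have "rank S \<le> rank M"
  proof -
    have "S = transpose P ** M ** Q"
      unfolding A by (simp add: matrix_mul_assoc PtP QtQ)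
        (metis QtQ matrix_mul_assoc matrix_mul_rid)
    thus ?thesis by (metis order_trans rank_mul_le_left rank_mul_le_right)
  qed
  ultimately have "rank S = CARD('k)" using rk by simp
  hence cardN: "card {i. s i \<noteq> 0} = CARD('k)" unfolding Ss rank_diagm .
  have cardf: "card (range f) = CARD('k)" using f by (simp add: card_image)
  have pos: "0 < s (f j)" for j
  proof (rule ccontr)
    assume "\<not> 0 < s (f j)"
    hence z: "s (f j) = 0" using Snn[of "f j"] unfolding s_def by simp
    have "{i. s i \<noteq> 0} \<subseteq> range f - {f j}"
    proof
      fix i assume i: "i \<in> {i. s i \<noteq> 0}"
      have "i \<in> range f"
      proof (rule ccontr)
        assume "i \<notin> range f"
        hence "s i \<le> 0" using top[of i j] z unfolding s_def by simp
        thus False using i Snn[of i] unfolding s_def by simp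
      qed
      moreover have "i \<noteq> f j" using i z by auto
      ultimately show "i \<in> range f - {f j}" by simp
    qed
    hence "card {i. s i \<noteq> 0} \<le> card (range f - {f j})" by (intro card_mono) auto
    also have "\<dots> = CARD('k) - 1" using cardf by simp
    moreover have "0 < CARD('k)" by (simp add: card_gt_0_iff)
    ultimately show False using cardN by linarith
  qed
  then show "\<And>j. 0 < D$j$j" unfolding Djj .
  have Neq: "{i. s i \<noteq> 0} = range f"
  proof (rule card_subset_eq[symmetric])
    show "finite {i. s i \<noteq> 0}" by simp
    show "range f \<subseteq> {i. s i \<noteq> 0}" using pos by (auto simp: less_le)
    show "card (range f) = card {i. s i \<noteq> 0}" using cardN cardf by simp
  qed
  have zero: "s i = 0" if "i \<notin> range f" for i using that Neq by blast
  have "M $ r $ c = (U ** D ** transpose U) $ r $ c" for r c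
  proof -
    have "M $ r $ c = (\<Sum>i\<in>UNIV. P$r$i * s i * Q$c$i)"
      unfolding A Ss by (simp add: matrix_matrix_mult_def diagm_def transpose_def mult_ifz
          sum_distrib_right mult_ac) 
    also have "\<dots> = (\<Sum>i\<in>range f. P$r$i * s i * Q$c$i)"
      by (rule sum.mono_neutral_right) (auto simp: zero)
    also have "\<dots> = (\<Sum>j\<in>UNIV. P$r$f j * s (f j) * Q$c$f j)"
      by (simp add: sum.reindex[OF inj_on_subset[OF f]])
    also have "\<dots> = (U ** D ** transpose U) $ r $ c"
      by (simp add: matrix_matrix_mult_def Dd diagm_def transpose_def UP QP mult_ifz ifz_mult)
    finally show ?thesis .
  qed
  then show "M = U ** D ** transpose U" by (simp add: vec_eq_iff)
qed

declare transpose_matrix_vector[simp del]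

lemma diagm_axis: "diagm d *v axis j 1 = d j *\<^sub>R axis j 1"
  by (simp add: diagm_mv vec_eq_iff axis_def)

lemma sigma_facts:
  fixes M :: "real^'d^'d" and U :: "real^'k^'d"
  assumes Mdec: "M = U ** diagm d ** transpose U" and UtU: "transpose U ** U = mat 1"
    and dpos: "\<And>j. 0 < d j"
  shows "\<And>j. sigma_min M \<le> d j" and "0 < sigma_min M" and "\<And>j. d j \<le> spec_norm M"
proof -
  have Mt: "transpose M = M" unfolding Mdec by (simp add: matrix_transpose_mul diagm_transpose matrix_mul_assoc)
  have MtM: "transpose M ** M = U ** diagm (\<lambda>j. d j * d j) ** transpose U"
  proof -
    have "transpose M ** M = U ** (diagm d ** (transpose U ** U) ** diagm d) ** transpose U"
      unfolding Mt unfolding Mdec by (simp add: matrix_mul_assoc)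
    also have "\<dots> = U ** diagm (\<lambda>j. d j * d j) ** transpose U" by (simp add: UtU diagm_mult)
    finally show ?thesis .
  qed
  define T where "T = {s. 0 < s \<and> singular_value M s}"
  have Uax: "norm (U *v axis j 1) = 1" for j using isometry_norm[OF UtU, of "axis j 1"] by simp
  have UtUv: "transpose U *v (U *v x) = x" for x by (simp add: matrix_vector_mul_assoc UtU)
  have inT: "d j \<in> T" for j
  proof -
    have "(transpose M ** M) *v (U *v axis j 1) = (d j ^ 2) *\<^sub>R (U *v axis j 1)"
      unfolding MtM by (simp add: matrix_vector_mul_assoc[symmetric] UtUv diagm_axis
          matrix_vector_mult_scaleR power2_eq_square)
    moreover have "U *v axis j 1 \<noteq> 0" using Uax[of j] by auto
    ultimately show ?thesis unfolding T_def singular_value_def using dpos[of j] by auto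
  qed
  have bdd: "bdd_below T" unfolding T_def by (rule bdd_belowI[of _ 0]) auto
  show "\<And>j. sigma_min M \<le> d j" unfolding sigma_min_def T_def[symmetric]
    by (rule cInf_lower[OF inT bdd])
  define m where "m = Min (range d)"
  have mpos: "0 < m" unfolding m_def using dpos by (subst Min_gr_iff) auto
  have Tge: "m \<le> s" if "s \<in> T" for s
  proof -
    from that obtain v where s0: "0 < s" and v0: "v \<noteq> 0"
      and ev: "(transpose M ** M) *v v = (s^2) *\<^sub>R v"
      unfolding T_def singular_value_def by auto
    define c where "c = transpose U *v v"
    have ev2: "U *v (diagm (\<lambda>j. d j * d j) *v c) = (s^2) *\<^sub>R v"
      using ev unfolding MtM c_def by (simp add: matrix_vector_mul_assoc matrix_mul_assoc)
    have "c \<noteq> 0"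
    proof
      assume "c = 0"
      hence "(s^2) *\<^sub>R v = 0" using ev2 by simp
      thus False using s0 v0 by simp
    qed
    then obtain i where ci: "c $ i \<noteq> 0" by (auto simp: vec_eq_iff)
    have "diagm (\<lambda>j. d j * d j) *v c = (s^2) *\<^sub>R c"
      using arg_cong[OF ev2, of "\<lambda>y. transpose U *v y"] unfolding c_def
      by (simp add: UtUv matrix_vector_mult_scaleR)
    hence "d i * d i * c$i = s^2 * c$i" by (simp add: diagm_mv vec_eq_iff)
    hence "d i * d i = s * s" using ci by (simp add: power2_eq_square)
    hence "d i = s" using dpos[of i] s0 power2_eq_imp_eq[of "d i" s]
      by (simp add: power2_eq_square)
    moreover have "m \<le> d i" unfolding m_def by simp
    ultimately show ?thesis by simp
  qed
  have "m \<le> Inf T" using inT by (intro cInf_greatest) (auto intro: Tge)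
  thus "0 < sigma_min M" unfolding sigma_min_def T_def[symmetric] using mpos by simp
  fix j
  have "M *v (U *v axis j 1) = d j *\<^sub>R (U *v axis j 1)"
    unfolding Mdec by (simp add: matrix_vector_mul_assoc[symmetric] UtUv diagm_axis
        matrix_vector_mult_scaleR)
  hence "norm (M *v (U *v axis j 1)) = d j" using Uax[of j] dpos[of j] by simp
  thus "d j \<le> spec_norm M" using spec_bound[of M "U *v axis j 1"] Uax[of j] by simp
qed

declare transpose_matrix_vector[simp del]

lemma diag_lower:
  assumes "\<And>i. m \<le> \<bar>a i\<bar>" and m0: "0 \<le> m"
  shows "m * norm x \<le> norm (diagm a *v x)"
proof -
  have "(m *\<^sub>R x) \<bullet> (m *\<^sub>R x) \<le> (diagm a *v x) \<bullet> (diagm a *v x)"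
    unfolding diagm_mv inner_vec_def
  proof (rule sum_mono, goal_cases)
    case (1 i)
    have "m^2 \<le> (a i)^2" using assms(1)[of i] m0 by (metis abs_le_square_iff abs_of_nonneg)
    hence "m^2 * (x$i)^2 \<le> (a i)^2 * (x$i)^2" by (intro mult_right_mono) auto
    thus ?case by (simp add: power2_eq_square mult_ac)
  qed
  hence "norm (m *\<^sub>R x) \<le> norm (diagm a *v x)" by (simp only: norm_le)
  thus ?thesis using m0 by simp
qed

lemma weyl:
  fixes M Mh :: "real^'d^'d" and U Uh :: "real^'k^'d"
  assumes Mdec: "M = U ** diagm d ** transpose U" and UtU: "transpose U ** U = mat 1"
    and dl: "\<And>j. \<sigma> \<le> d j" and s0: "0 \<le> \<sigma>"
    and hb: "\<And>x. (\<And>j. j \<noteq> j0 \<Longrightarrow> column j Uh \<bullet> x = 0) \<Longrightarrow> norm (Mh *v x) \<le> c * norm x"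
  shows "\<sigma> - spec_norm (Mh - M) \<le> c"
proof -
  define W where "W = (\<lambda>j. column j Uh) ` (UNIV - {j0})"
  define V1 where "V1 = {y. \<forall>x\<in>span W. orthogonal x y}"
  define V2 where "V2 = range ((*v) U)"
  have cW: "card W \<le> CARD('k) - 1" unfolding W_def
    using card_image_le[of "UNIV - {j0}" "\<lambda>j. column j Uh"] by (simp add: card_Diff_singleton)
  have dW: "dim (span W) \<le> CARD('k) - 1"
    using dim_le_card'[of W] cW unfolding W_def by simp
  have "dim {y \<in> UNIV. \<forall>x\<in>span W. orthogonal x y} + dim (span W) = dim (UNIV :: (real^'d) set)"
    by (rule dim_subspace_orthogonal_to_vectors) auto
  hence dV1: "dim V1 + dim (span W) = CARD('d)" unfolding V1_def by simp
  have injU: "inj ((*v) U)"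
    by (metis (no_types, lifting) injI isometry_norm[OF UtU] matrix_vector_mult_diff_distrib
        norm_eq_zero right_minus_eq)
  have dV2: "dim V2 = CARD('k)" unfolding V2_def
    using dim_image_eq[of "(*v) U" UNIV] injU matrix_vector_mul_linear
    by (simp add: inj_on_def inj_def)
  have sV1: "subspace V1" unfolding V1_def subspace_def orthogonal_def
    by (auto simp: inner_add_right)
  have sV2: "subspace V2" unfolding V2_def subspace_def
  proof (intro conjI ballI allI)
    show "0 \<in> range ((*v) U)" by (metis rangeI matrix_vector_mult_0_right)
  next
    fix x y assume "x \<in> range ((*v) U)" "y \<in> range ((*v) U)"
    then obtain a b where "x = U *v a" "y = U *v b" by auto
    thus "x + y \<in> range ((*v) U)" by (metis rangeI matrix_vector_right_distrib)
  next
    fix c x assume "x \<in> range ((*v) U)"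
    then obtain a where "x = U *v a" by auto
    thus "c *\<^sub>R x \<in> range ((*v) U)" by (metis rangeI matrix_vector_mult_scaleR)
  qed
  have "dim {x + y |x y. x \<in> V1 \<and> y \<in> V2} + dim (V1 \<inter> V2) = dim V1 + dim V2"
    by (rule dim_sums_Int[OF sV1 sV2])
  moreover have "dim {x + y |x y. x \<in> V1 \<and> y \<in> V2} \<le> CARD('d)" by (rule dim_subset_UNIV_cart)
  moreover have "0 < CARD('k)" by (simp add: card_gt_0_iff)
  ultimately have "dim (V1 \<inter> V2) \<noteq> 0" using dV1 dV2 dW by linarith
  then obtain x where xV1: "x \<in> V1" and xV2: "x \<in> V2" and x0: "x \<noteq> 0"
    using dim_eq_0[of "V1 \<inter> V2"] by auto
  from xV2 obtain z where xz: "x = U *v z" unfolding V2_def by auto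
  have "column j Uh \<bullet> x = 0" if "j \<noteq> j0" for j
  proof -
    have "column j Uh \<in> span W" unfolding W_def using that by (intro span_base) auto
    thus ?thesis using xV1 unfolding V1_def orthogonal_def by auto
  qed
  hence up: "norm (Mh *v x) \<le> c * norm x" by (rule hb)
  have nx: "norm x = norm z" unfolding xz by (rule isometry_norm[OF UtU])
  have "M *v x = U *v (diagm d *v z)"
  proof -
    have "transpose U *v (U *v z) = z" by (simp only: matrix_vector_mul_assoc UtU matrix_vector_mul_lid)
    moreover have "(U ** diagm d ** transpose U) *v (U *v z) = U *v (diagm d *v (transpose U *v (U *v z)))"
      by (simp only: matrix_vector_mul_assoc matrix_mul_assoc)
    ultimately show ?thesis unfolding Mdec xz by simp
  qed
  hence "norm (M *v x) = norm (diagm d *v z)" using isometry_norm[OF UtU] by simp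
  also have "\<dots> \<ge> \<sigma> * norm z" by (rule diag_lower) (use dl s0 in \<open>auto intro: order_trans[OF _ abs_ge_self]\<close>)
  finally have lo: "\<sigma> * norm x \<le> norm (M *v x)" using nx by simp
  have "norm (M *v x) \<le> norm (Mh *v x) + norm ((Mh - M) *v x)"
  proof -
    have "M *v x = Mh *v x - (Mh - M) *v x" by (simp add: matrix_vector_mult_diff_rdistrib)
    thus ?thesis by (metis norm_triangle_ineq4)
  qed
  also have "norm ((Mh - M) *v x) \<le> spec_norm (Mh - M) * norm x" by (rule spec_bound)
  finally have "\<sigma> * norm x \<le> c * norm x + spec_norm (Mh - M) * norm x" using lo up by linarith
  hence "(\<sigma> - spec_norm (Mh - M)) * norm x \<le> c * norm x" by (simp add: algebra_simps)
  thus ?thesis using x0 by simp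
qed

declare transpose_matrix_vector[simp del]

lemma Ut_bound:
  fixes U :: "real^'k^'d"
  assumes UtU: "transpose U ** U = mat 1"
  shows "norm (transpose U *v y) \<le> norm y"
proof -
  have "(transpose U *v y) \<bullet> (transpose U *v y) = y \<bullet> (U *v (transpose U *v y))"
    by (simp add: inner_mv)
  also have "\<dots> \<le> norm y * norm (U *v (transpose U *v y))" by (rule order_trans[OF abs_ge_self Cauchy_Schwarz_ineq2])
  also have "\<dots> = norm y * norm (transpose U *v y)" by (simp add: isometry_norm[OF UtU])
  finally have "(norm (transpose U *v y))^2 \<le> norm y * norm (transpose U *v y)"
    by (simp add: power2_norm_eq_inner)
  thus ?thesis by (cases "norm (transpose U *v y) = 0") (auto simp: power2_eq_square)
qed

lemma pyth:
  fixes U :: "real^'k^'d"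
  assumes UtU: "transpose U ** U = mat 1" and z: "transpose U *v z = 0"
  shows "(norm (U *v a + z))^2 = (norm a)^2 + (norm z)^2"
proof -
  have "(U *v a) \<bullet> z = 0" by (simp add: inner_mv z)
  hence "(norm (U *v a + z))^2 = (norm (U *v a))^2 + (norm z)^2"
    by (simp add: power2_norm_eq_inner inner_add_left inner_add_right inner_commute)
  thus ?thesis by (simp add: isometry_norm[OF UtU])
qed

lemma proj_perp:
  fixes U :: "real^'k^'d"
  assumes UtU: "transpose U ** U = mat 1"
  shows "norm (y - U *v (transpose U *v y)) \<le> norm y"
proof -
  have tz: "transpose U *v (y - U *v (transpose U *v y)) = 0"
  proof -
    have "transpose U *v (U *v (transpose U *v y)) = transpose U *v y"
      by (simp only: matrix_vector_mul_assoc matrix_mul_assoc UtU matrix_mul_lid)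
    thus ?thesis by (simp add: matrix_vector_mult_diff_distrib)
  qed
  have "(norm (U *v (transpose U *v y) + (y - U *v (transpose U *v y))))^2 =
        (norm (transpose U *v y))^2 + (norm (y - U *v (transpose U *v y)))^2"
    by (rule pyth[OF UtU tz])
  hence "(norm y)^2 = (norm (transpose U *v y))^2 + (norm (y - U *v (transpose U *v y)))^2" by simp
  hence "(norm (y - U *v (transpose U *v y)))^2 \<le> (norm y)^2"
    using zero_le_power2[of "norm (transpose U *v y)"] by linarith
  thus ?thesis by (simp add: power2_le_iff_abs_le)
qed

lemma diagm_mv2: "diagm a *v (diagm c *v y) = diagm (\<lambda>j. a j * c j) *v y"
  by (simp add: matrix_vector_mul_assoc diagm_mult)

lemma diag_powr_diagm: "diag_powr (diagm d) s = diagm (\<lambda>j. d j powr s)"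
  by (simp add: diag_powr_def diagm_def vec_eq_iff)

declare transpose_matrix_vector[simp del]

theorem lemma3p13:
  fixes M Mh :: "real^'d^'d" and U Uh :: "real^'k^'d" and D Dh :: "real^'k^'k"
  assumes "psd_mat M"
    and "rank M = CARD('k)"
    and "symmetric_mat Mh"
    and "spec_norm (Mh - M) \<le> sigma_min M / 4"
    and "trunc_svd M U D"
    and "trunc_svd Mh Uh Dh"
  shows "\<exists>R::real^'k^'k. orthogonal_matrix R \<and>
    (let \<epsilon> = spec_norm (Mh - M);
         W = U ** diag_powr D (-1/2) ** R;
         Wh = Uh ** diag_powr Dh (-1/2);
         B = U ** diag_powr D (1/2) ** R;
         Bh = Uh ** diag_powr Dh (1/2)
     in spec_norm (W - Wh) \<le> 5 * \<epsilon> / sigma_min M powr (3/2) \<and>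
        spec_norm (transpose B ** (W - Wh)) \<le> 3 * \<epsilon> / sigma_min M \<and>
        spec_norm (B - Bh) \<le> 3 * \<epsilon> * sqrt (spec_norm M) / sigma_min M)"
proof -
  note tM = tsvd_props[OF assms(5)]
  note tMh = tsvd_props[OF assms(6)]
  define d where "d j = D$j$j" for j
  define b where "b j = Dh$j$j" for j
  have UtU: "transpose U ** U = mat 1" by (rule tM(1))
  have UhtUh: "transpose Uh ** Uh = mat 1" by (rule tMh(1))
  have Dd: "D = diagm d" using tM(3) unfolding d_def .
  have Dhd: "Dh = diagm b" using tMh(3) unfolding b_def .
  have Mdec: "M = U ** diagm d ** transpose U" using tsvd_rank(1)[OF assms(5,2)] Dd by simp
  have dpos: "0 < d j" for j using tsvd_rank(2)[OF assms(5,2)] unfolding d_def .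
  have MhUh: "Mh ** Uh = Uh ** diagm b" using tMh(2) Dhd by simp
  define \<sigma> where "\<sigma> = sigma_min M"
  have dsig: "\<sigma> \<le> d j" for j unfolding \<sigma>_def by (rule sigma_facts(1)[OF Mdec UtU dpos])
  have sigpos: "0 < \<sigma>" unfolding \<sigma>_def by (rule sigma_facts(2)[OF Mdec UtU dpos])
  have dM: "d j \<le> spec_norm M" for j by (rule sigma_facts(3)[OF Mdec UtU dpos])
  define \<epsilon> where "\<epsilon> = spec_norm (Mh - M)"
  have eps0: "0 \<le> \<epsilon>" unfolding \<epsilon>_def by (rule spec_nonneg)
  have epsle: "\<epsilon> \<le> \<sigma> / 4" using assms(4) unfolding \<epsilon>_def \<sigma>_def .
  have bge: "\<sigma> - \<epsilon> \<le> b j" for j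
  proof -
    have hb: "\<And>x. (\<And>j'. j' \<noteq> j \<Longrightarrow> column j' Uh \<bullet> x = 0) \<Longrightarrow> norm (Mh *v x) \<le> Dh$j$j * norm x"
      by (fact tMh(5)[of j])
    show ?thesis unfolding \<epsilon>_def b_def by (rule weyl[OF Mdec UtU dsig less_imp_le[OF sigpos] hb])
  qed
  have se: "3/4 * \<sigma> \<le> \<sigma> - \<epsilon>" using epsle by simp
  have sepos: "0 < \<sigma> - \<epsilon>" using se sigpos by simp
  have bpos: "0 < b j" for j using bge[of j] sepos by simp
  have UtUv: "transpose U *v (U *v y) = y" for y
    by (simp only: matrix_vector_mul_assoc UtU matrix_vector_mul_lid)
  have Mv: "M *v y = U *v (diagm d *v (transpose U *v y))" for y
    unfolding Mdec by (simp only: matrix_vector_mul_assoc matrix_mul_assoc)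
  have MhUhv: "Mh *v (Uh *v y) = Uh *v (diagm b *v y)" for y
    by (simp only: matrix_vector_mul_assoc MhUh)
  define H where "H = transpose U ** Uh"
  have Hv: "H *v x = transpose U *v (Uh *v x)" for x
    unfolding H_def by (simp only: matrix_vector_mul_assoc)
  define Yf where "Yf x = Uh *v x - U *v (H *v x)" for x
  have UtY: "transpose U *v Yf x = 0" for x
    unfolding Yf_def by (simp add: matrix_vector_mult_diff_distrib UtUv Hv)
  have Ydec: "Uh *v x = U *v (H *v x) + Yf x" for x unfolding Yf_def by simp
  have nsplit: "(norm x)^2 = (norm (H *v x))^2 + (norm (Yf x))^2" for x
    using pyth[OF UtU UtY[of x], of "H *v x"] Ydec[of x] isometry_norm[OF UhtUh, of x] by simp
  have YDh: "norm (Yf (diagm b *v x)) \<le> \<epsilon> * norm x" for x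
  proof -
    define w where "w = (Mh - M) *v (Uh *v x)"
    have "Yf (diagm b *v x) = w - U *v (transpose U *v w)"
    proof -
      have "Yf (diagm b *v x) = Mh *v (Uh *v x) - U *v (transpose U *v (Mh *v (Uh *v x)))"
        unfolding Yf_def Hv MhUhv ..
      moreover have "M *v (Uh *v x) - U *v (transpose U *v (M *v (Uh *v x))) = 0"
        by (simp add: Mv UtUv)
      ultimately show ?thesis unfolding w_def
        by (simp add: matrix_vector_mult_diff_rdistrib matrix_vector_mult_diff_distrib algebra_simps)
    qed
    also have "norm \<dots> \<le> norm w" by (rule proj_perp[OF UtU])
    also have "\<dots> \<le> \<epsilon> * norm (Uh *v x)" unfolding w_def \<epsilon>_def by (rule spec_bound)
    also have "norm (Uh *v x) = norm x" by (rule isometry_norm[OF UhtUh])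
    finally show ?thesis .
  qed
  have Yscale: "norm (Yf (diagm a *v x)) \<le> \<epsilon> * c * norm x"
    if ac: "\<And>j. \<bar>a j\<bar> \<le> c * b j" for a c x
  proof -
    have "diagm a *v x = diagm b *v (diagm (\<lambda>j. a j / b j) *v x)"
    proof -
      have "(\<lambda>j. b j * (a j / b j)) = a" using bpos by (auto simp: fun_eq_iff less_le)
      thus ?thesis by (simp only: diagm_mv2)
    qed
    hence "norm (Yf (diagm a *v x)) \<le> \<epsilon> * norm (diagm (\<lambda>j. a j / b j) *v x)" using YDh by simp
    also have "\<dots> \<le> \<epsilon> * (c * norm x)"
    proof (intro mult_left_mono[OF _ eps0] diagm_bound)
      fix j show "\<bar>a j / b j\<bar> \<le> c" using ac[of j] bpos[of j] by (simp add: divide_le_eq abs_div)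
    qed
    finally show ?thesis by (simp add: mult.assoc)
  qed
  define \<delta> where "\<delta> = \<epsilon> / (\<sigma> - \<epsilon>)"
  have delta0: "0 \<le> \<delta>" unfolding \<delta>_def using eps0 sepos by simp
  have delta13: "\<delta> \<le> 1/3" unfolding \<delta>_def using epsle se sepos sigpos by (simp add: divide_le_eq)
  have Ybound: "norm (Yf x) \<le> \<delta> * norm x" for x
  proof -
    have "norm (Yf (diagm (\<lambda>_. 1) *v x)) \<le> \<epsilon> * (1 / (\<sigma> - \<epsilon>)) * norm x"
      by (rule Yscale) (use bge sepos in \<open>simp add: divide_le_eq\<close>)
    thus ?thesis unfolding diagm_one \<delta>_def by simp
  qed
  have Hhi: "norm (H *v x) \<le> norm x" for x
  proof -
    have "(norm (H *v x))^2 \<le> (norm x)^2" using nsplit[of x] zero_le_power2[of "norm (Yf x)"] by linarith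
    thus ?thesis by (rule power2_le_imp_le) simp
  qed
  have Hlo: "(1 - \<delta>^2) * (norm x)^2 \<le> (norm (H *v x))^2" for x
  proof -
    have "(norm (Yf x))^2 \<le> (\<delta> * norm x)^2" using Ybound[of x] by (simp add: power_mono)
    thus ?thesis using nsplit[of x] by (simp add: algebra_simps power_mult_distrib)
  qed
  obtain R where orthR: "orthogonal_matrix R" and RH: "\<And>x. norm ((R - H) *v x) \<le> \<delta>^2 * norm x"
  proof -
    have e1: "0 \<le> \<delta>^2" by simp
    have "\<delta>^2 \<le> (1/3)^2" by (rule power_mono[OF delta13 delta0])
    moreover have "(1/3::real)^2 = 1/9" by (simp add: power2_eq_square)
    ultimately have e2: "\<delta>^2 < 1" by linarith
    show ?thesis using polar[OF Hlo Hhi e1 e2] that by blast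
  qed

  define r where "r = sqrt \<sigma>"
  define t where "t = sqrt (\<sigma> - \<epsilon>)"
  have rpos: "0 < r" unfolding r_def using sigpos by simp
  have r2: "r * r = \<sigma>" unfolding r_def using sigpos by simp
  have tpos: "0 < t" unfolding t_def using sepos by simp
  have t2: "t * t = \<sigma> - \<epsilon>" unfolding t_def using sepos by simp
  have t45: "4/5 * r \<le> t"
  proof (rule power2_le_imp_le)
    show "(4/5 * r)^2 \<le> t^2" using r2 t2 se sigpos by (simp add: power2_eq_square algebra_simps)
    show "0 \<le> t" using tpos by simp
  qed
  have invt: "1 / t \<le> 5 / (4 * r)"
  proof -
    have "1 / t \<le> 1 / (4/5 * r)" using t45 rpos by (intro divide_left_mono) auto
    thus ?thesis by simp
  qed
  define p where "p j = sqrt (d j)" for j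
  define m where "m j = 1 / sqrt (d j)" for j
  define q where "q j = sqrt (b j)" for j
  define qm where "qm j = 1 / sqrt (b j)" for j
  have powr_h: "x powr (1/2) = sqrt x" if "0 < x" for x :: real using that by (simp add: powr_half_sqrt)
  have powr_mh: "x powr (- (1/2)) = 1 / sqrt x" if "0 < x" for x :: real
  proof -
    have "x powr (- (1/2)) = inverse (x powr (1/2))" by (rule powr_minus)
    thus ?thesis using that by (simp add: powr_half_sqrt inverse_eq_divide)
  qed
  have DP: "diag_powr D (1/2) = diagm p" unfolding Dd diag_powr_diagm p_def
    using dpos by (simp add: powr_h)
  have DM: "diag_powr D (-1/2) = diagm m" unfolding Dd diag_powr_diagm m_def
    using dpos by (simp add: powr_mh)
  have DhP: "diag_powr Dh (1/2) = diagm q" unfolding Dhd diag_powr_diagm q_def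
    using bpos by (simp add: powr_h)
  have DhM: "diag_powr Dh (-1/2) = diagm qm" unfolding Dhd diag_powr_diagm qm_def
    using bpos by (simp add: powr_mh)
  have pp: "(\<lambda>j. p j * p j) = d" unfolding p_def using dpos by (auto simp: fun_eq_iff less_imp_le)
  have mp: "(\<lambda>j. m j * p j) = (\<lambda>_. 1)" unfolding p_def m_def using dpos by (auto simp: fun_eq_iff less_le)
  have pm: "(\<lambda>j. p j * m j) = (\<lambda>_. 1)" unfolding p_def m_def using dpos by (auto simp: fun_eq_iff less_le)
  have qq: "(\<lambda>j. q j * q j) = b" unfolding q_def using bpos by (auto simp: fun_eq_iff less_imp_le)
  have qqm: "(\<lambda>j. q j * qm j) = (\<lambda>_. 1)" unfolding q_def qm_def using bpos by (auto simp: fun_eq_iff less_le)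
  have rp: "r \<le> p j" for j unfolding r_def p_def using dsig[of j] by simp
  have q0: "0 \<le> q j" for j unfolding q_def using bpos[of j] by simp
  have tq: "t \<le> q j" for j unfolding t_def q_def using bge[of j] by simp
  have mle: "\<bar>m j\<bar> \<le> 1 / r" for j
    unfolding m_def r_def using dsig[of j] sigpos by (simp add: frac_le)
  have qmle: "\<bar>qm j\<bar> \<le> 1 / t" for j
    unfolding qm_def t_def using bge[of j] sepos by (simp add: frac_le)
  define sm where "sm = sqrt (spec_norm M)"
  have ple: "\<bar>p j\<bar> \<le> sm" for j unfolding p_def sm_def using dM[of j] dpos[of j] by simp
  have rsm: "r \<le> sm" unfolding r_def sm_def using dsig[of undefined] dM[of undefined] by simp
  define Z where "Z = diagm p ** H - H ** diagm q"
  have Zv: "Z *v x = diagm p *v (H *v x) - H *v (diagm q *v x)" for x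
    unfolding Z_def by (simp add: matrix_vector_mult_diff_rdistrib matrix_vector_mul_assoc matrix_mul_assoc)
  define C where "C = diagm p ** Z + Z ** diagm q"
  have Cv: "C *v x = diagm d *v (H *v x) - H *v (diagm b *v x)" for x
    unfolding C_def
    by (simp add: matrix_vector_mult_add_rdistrib matrix_vector_mul_assoc[symmetric] Zv
        matrix_vector_mult_diff_distrib diagm_mv2 pp qq)
  have Cb: "norm (C *v x) \<le> \<epsilon> * norm x" for x
  proof -
    have "diagm d *v (H *v x) = transpose U *v (M *v (Uh *v x))" by (simp add: Mv UtUv Hv)
    moreover have "H *v (diagm b *v x) = transpose U *v (Mh *v (Uh *v x))" by (simp add: Hv MhUhv)
    ultimately have "C *v x = - (transpose U *v ((Mh - M) *v (Uh *v x)))"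
      unfolding Cv by (simp add: matrix_vector_mult_diff_rdistrib matrix_vector_mult_diff_distrib)
    hence "norm (C *v x) = norm (transpose U *v ((Mh - M) *v (Uh *v x)))" by simp
    also have "\<dots> \<le> norm ((Mh - M) *v (Uh *v x))" by (rule Ut_bound[OF UtU])
    also have "\<dots> \<le> \<epsilon> * norm (Uh *v x)" unfolding \<epsilon>_def by (rule spec_bound)
    finally show ?thesis using isometry_norm[OF UhtUh] by simp
  qed
  have "spec_norm Z \<le> spec_norm C / r" unfolding C_def by (rule sylvester[OF rp q0 rpos])
  also have "spec_norm C \<le> \<epsilon>" by (rule spec_le[OF Cb])
  finally have sZ: "spec_norm Z \<le> \<epsilon> / r" using rpos by (simp add: divide_right_mono)
  have Zx: "norm (Z *v x) \<le> \<epsilon> / r * norm x" for x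
    using spec_bound[of Z x] sZ by (meson mult_right_mono norm_ge_zero order_trans)

  have qpos: "0 < q j" for j unfolding q_def using bpos[of j] by simp
  have dsq: "\<delta>^2 \<le> 4/9 * (\<epsilon> / \<sigma>)"
  proof -
    have "\<epsilon> / (\<sigma> - \<epsilon>)^2 \<le> (\<sigma>/4) / ((3/4*\<sigma>)^2)"
    proof (rule frac_le)
      show "0 \<le> \<sigma>/4" using sigpos by simp
      show "\<epsilon> \<le> \<sigma>/4" by (rule epsle)
      show "0 < (3/4*\<sigma>)^2" using sigpos by simp
      show "(3/4*\<sigma>)^2 \<le> (\<sigma> - \<epsilon>)^2" using se sigpos by (intro power_mono) auto
    qed
    also have "(\<sigma>/4) / ((3/4*\<sigma>)^2) = 4 / (9 * \<sigma>)" using sigpos by (simp add: power2_eq_square field_simps)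
    finally have "\<epsilon> * (\<epsilon> / (\<sigma> - \<epsilon>)^2) \<le> \<epsilon> * (4 / (9 * \<sigma>))" using eps0 by (rule mult_left_mono)
    moreover have "\<delta>^2 = \<epsilon> * (\<epsilon> / (\<sigma> - \<epsilon>)^2)" unfolding \<delta>_def by (simp add: power2_eq_square)
    ultimately show ?thesis by simp
  qed
  have sig32: "\<sigma> powr (3/2) = \<sigma> * r"
  proof -
    have "\<sigma> powr (3/2) = \<sigma> powr (1 + 1/2)" by simp
    also have "\<dots> = \<sigma> powr 1 * \<sigma> powr (1/2)" by (rule powr_add)
    finally show ?thesis using sigpos unfolding r_def by (simp add: powr_half_sqrt)
  qed
  have eps_t: "\<epsilon> / t \<le> 5/4 * (\<epsilon> / r)"
  proof -
    have "\<epsilon> * (1/t) \<le> \<epsilon> * (5 / (4 * r))" using invt eps0 by (rule mult_left_mono)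
    thus ?thesis by simp
  qed
  have K1: "\<delta>^2 / r + \<epsilon> / r * (1 / r) * (1 / t) + \<epsilon> * (1 / (t*t*t)) \<le> 5 * \<epsilon> / \<sigma> powr (3/2)"
  proof -
    define k where "k = \<epsilon> / (\<sigma> * r)"
    have k0: "0 \<le> k" unfolding k_def using eps0 sigpos rpos by simp
    have T1: "\<delta>^2 / r \<le> 4/9 * k"
    proof -
      have "\<delta>^2 / r \<le> (4/9 * (\<epsilon> / \<sigma>)) / r" using dsq rpos by (intro divide_right_mono) auto
      thus ?thesis unfolding k_def by simp
    qed
    have T2: "\<epsilon> / r * (1 / r) * (1 / t) \<le> 5/4 * k"
    proof -
      have "\<epsilon> / r * (1 / r) * (1 / t) \<le> \<epsilon> / r * (1 / r) * (5 / (4 * r))"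
        using invt eps0 rpos by (intro mult_left_mono) auto
      also have "\<dots> = 5/4 * k" unfolding k_def using rpos r2[symmetric] by (simp add: field_simps)
      finally show ?thesis .
    qed
    have T3: "\<epsilon> * (1 / (t*t*t)) \<le> 125/64 * k"
    proof -
      have "(1/t)^3 \<le> (5 / (4 * r))^3" using invt tpos by (intro power_mono) auto
      hence "\<epsilon> * (1/t)^3 \<le> \<epsilon> * (5 / (4 * r))^3" using eps0 by (rule mult_left_mono)
      also have "\<epsilon> * (5 / (4 * r))^3 = 125/64 * k" unfolding k_def using rpos r2[symmetric]
        by (simp add: field_simps power3_eq_cube)
      finally show ?thesis by (simp add: power3_eq_cube)
    qed
    have "\<delta>^2 / r + \<epsilon> / r * (1 / r) * (1 / t) + \<epsilon> * (1 / (t*t*t)) \<le> 5 * k"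
      using T1 T2 T3 k0 by linarith
    also have "5 * k = 5 * \<epsilon> / \<sigma> powr (3/2)" unfolding k_def sig32 by simp
    finally show ?thesis .
  qed
  have K2: "\<delta>^2 + \<epsilon> / r * (1 / t) \<le> 3 * \<epsilon> / \<sigma>"
  proof -
    have "\<epsilon> / r * (1 / t) \<le> \<epsilon> / r * (5 / (4 * r))" using invt eps0 rpos by (intro mult_left_mono) auto
    also have "\<dots> = 5/4 * (\<epsilon> / \<sigma>)" using rpos r2[symmetric] by (simp add: field_simps)
    finally have "\<epsilon> / r * (1 / t) \<le> 5/4 * (\<epsilon> / \<sigma>)" .
    moreover have "0 \<le> \<epsilon> / \<sigma>" using eps0 sigpos by simp
    ultimately show ?thesis using dsq by simp
  qed
  have K3: "sm * \<delta>^2 + \<epsilon> / r + \<epsilon> * (1 / t) \<le> 3 * \<epsilon> * sm / \<sigma>"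
  proof -
    have sm0: "0 \<le> sm" using rsm rpos by simp
    have a: "sm * \<delta>^2 \<le> 4/9 * (\<epsilon> * sm / \<sigma>)"
      using mult_left_mono[OF dsq sm0] by (simp add: mult_ac)
    have er: "\<epsilon> / r \<le> \<epsilon> * sm / \<sigma>"
    proof -
      have "\<epsilon> / r = \<epsilon> * r / \<sigma>" using rpos r2[symmetric] by (simp add: field_simps)
      also have "\<dots> \<le> \<epsilon> * sm / \<sigma>" using rsm eps0 sigpos by (intro divide_right_mono mult_left_mono) auto
      finally show ?thesis .
    qed
    have c: "\<epsilon> * (1 / t) \<le> 5/4 * (\<epsilon> * sm / \<sigma>)" using eps_t er by simp
    have X0: "0 \<le> \<epsilon> * sm / \<sigma>" using eps0 sm0 sigpos by simp
    have "3 * \<epsilon> * sm / \<sigma> = 3 * (\<epsilon> * sm / \<sigma>)" by simp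
    thus ?thesis using a er c X0 by linarith
  qed
  define W where "W = U ** diagm m ** R"
  define Wh where "Wh = Uh ** diagm qm"
  define B where "B = U ** diagm p ** R"
  define Bh where "Bh = Uh ** diagm q"
  have RRt: "R ** transpose R = mat 1" using orthR unfolding orthogonal_matrix_def by auto
  have RtIso: "transpose (transpose R) ** transpose R = mat 1" using RRt by simp
  have eZ: "diagm m *v (Z *v (diagm qm *v x)) = H *v (diagm qm *v x) - diagm m *v (H *v x)" for x
    by (simp add: Zv matrix_vector_mult_diff_distrib diagm_mv2 mp qqm diagm_one)
  define a1 where "a1 x = diagm m *v ((R - H) *v x) - diagm m *v (Z *v (diagm qm *v x))" for x
  have Wv: "(W - Wh) *v x = U *v a1 x - Yf (diagm qm *v x)" for x
  proof -
    have "(W - Wh) *v x = U *v (diagm m *v (R *v x)) - Uh *v (diagm qm *v x)"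
      unfolding W_def Wh_def by (simp add: matrix_vector_mult_diff_rdistrib matrix_vector_mul_assoc matrix_mul_assoc)
    also have "\<dots> = U *v a1 x - Yf (diagm qm *v x)"
      unfolding a1_def eZ Ydec[of "diagm qm *v x"]
      by (simp add: matrix_vector_mult_diff_rdistrib matrix_vector_mult_diff_distrib algebra_simps)
    finally show ?thesis .
  qed
  have ZQ: "norm (Z *v (diagm qm *v x)) \<le> \<epsilon> / r * (1 / t) * norm x" for x
  proof -
    have "norm (Z *v (diagm qm *v x)) \<le> \<epsilon> / r * norm (diagm qm *v x)" by (rule Zx)
    also have "\<dots> \<le> \<epsilon> / r * (1 / t * norm x)"
      using diagm_bound[OF qmle] eps0 rpos by (intro mult_left_mono) auto
    finally show ?thesis by simp
  qed
  have RHx: "norm ((R - H) *v x) \<le> \<delta>^2 * norm x" for x by (rule RH)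
  have a1b: "norm (a1 x) \<le> (\<delta>^2 / r + \<epsilon> / r * (1 / r) * (1 / t)) * norm x" for x
  proof -
    have "norm (diagm m *v ((R - H) *v x)) \<le> 1 / r * norm ((R - H) *v x)" by (rule diagm_bound[OF mle])
    also have "\<dots> \<le> 1 / r * (\<delta>^2 * norm x)" using RHx rpos by (intro mult_left_mono) auto
    finally have 1: "norm (diagm m *v ((R - H) *v x)) \<le> \<delta>^2 / r * norm x" by simp
    have "norm (diagm m *v (Z *v (diagm qm *v x))) \<le> 1 / r * norm (Z *v (diagm qm *v x))"
      by (rule diagm_bound[OF mle])
    also have "\<dots> \<le> 1 / r * (\<epsilon> / r * (1 / t) * norm x)" using ZQ rpos by (intro mult_left_mono) auto
    finally have 2: "norm (diagm m *v (Z *v (diagm qm *v x))) \<le> \<epsilon> / r * (1 / r) * (1 / t) * norm x"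
      by (simp add: mult_ac)
    have "norm (a1 x) \<le> norm (diagm m *v ((R - H) *v x)) + norm (diagm m *v (Z *v (diagm qm *v x)))"
      unfolding a1_def by (rule norm_triangle_ineq4)
    thus ?thesis using 1 2 by (simp add: algebra_simps)
  qed
  have qmY: "\<bar>qm j\<bar> \<le> 1 / (t*t*t) * b j" for j
  proof -
    have "t*t*t \<le> q j * q j * q j" using tq[of j] tpos by (intro mult_mono) auto
    hence "1 / q j \<le> q j * q j / (t*t*t)" using tpos qpos[of j] by (simp add: field_simps)
    moreover have "b j = q j * q j" using qq by (metis)
    ultimately show ?thesis unfolding qm_def q_def[symmetric] using qpos[of j] by simp
  qed
  have qY: "\<bar>q j\<bar> \<le> 1 / t * b j" for j
  proof -
    have "t * q j \<le> q j * q j" using tq[of j] qpos[of j] by (intro mult_right_mono) auto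
    hence "q j \<le> q j * q j / t" using tpos by (simp add: field_simps)
    moreover have "b j = q j * q j" using qq by metis
    ultimately show ?thesis using qpos[of j] by simp
  qed
  have bound1: "spec_norm (W - Wh) \<le> 5 * \<epsilon> / \<sigma> powr (3/2)"
  proof -
    have "norm ((W - Wh) *v x) \<le> (\<delta>^2 / r + \<epsilon> / r * (1 / r) * (1 / t) + \<epsilon> * (1 / (t*t*t))) * norm x" for x
    proof -
      have "norm ((W - Wh) *v x) \<le> norm (U *v a1 x) + norm (Yf (diagm qm *v x))"
        unfolding Wv by (rule norm_triangle_ineq4)
      also have "norm (U *v a1 x) = norm (a1 x)" by (rule isometry_norm[OF UtU])
      finally show ?thesis using a1b[of x] Yscale[OF qmY, of x] by (simp add: algebra_simps)
    qed
    hence "spec_norm (W - Wh) \<le> \<delta>^2 / r + \<epsilon> / r * (1 / r) * (1 / t) + \<epsilon> * (1 / (t*t*t))"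
      by (rule spec_le)
    thus ?thesis using K1 by linarith
  qed
  have bound2: "spec_norm (transpose B ** (W - Wh)) \<le> 3 * \<epsilon> / \<sigma>"
  proof -
    have "norm ((transpose B ** (W - Wh)) *v x) \<le> (\<delta>^2 + \<epsilon> / r * (1 / t)) * norm x" for x
    proof -
      have "(transpose B ** (W - Wh)) *v x = transpose R *v (diagm p *v (transpose U *v ((W - Wh) *v x)))"
        unfolding B_def by (simp add: matrix_transpose_mul diagm_transpose matrix_vector_mul_assoc matrix_mul_assoc)
      also have "transpose U *v ((W - Wh) *v x) = a1 x"
        unfolding Wv by (simp add: matrix_vector_mult_diff_distrib UtUv UtY)
      also have "diagm p *v a1 x = (R - H) *v x - Z *v (diagm qm *v x)"
        unfolding a1_def by (simp add: matrix_vector_mult_diff_distrib diagm_mv2 pm diagm_one)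
      finally have "norm ((transpose B ** (W - Wh)) *v x) = norm ((R - H) *v x - Z *v (diagm qm *v x))"
        using isometry_norm[OF RtIso] by simp
      also have "\<dots> \<le> norm ((R - H) *v x) + norm (Z *v (diagm qm *v x))" by (rule norm_triangle_ineq4)
      finally show ?thesis using RHx[of x] ZQ[of x] by (simp add: algebra_simps)
    qed
    hence "spec_norm (transpose B ** (W - Wh)) \<le> \<delta>^2 + \<epsilon> / r * (1 / t)" by (rule spec_le)
    thus ?thesis using K2 by linarith
  qed
  have bound3: "spec_norm (B - Bh) \<le> 3 * \<epsilon> * sm / \<sigma>"
  proof -
    have "norm ((B - Bh) *v x) \<le> (sm * \<delta>^2 + \<epsilon> / r + \<epsilon> * (1 / t)) * norm x" for x
    proof -
      have "(B - Bh) *v x = U *v (diagm p *v ((R - H) *v x) + Z *v x) - Yf (diagm q *v x)"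
      proof -
        have "(B - Bh) *v x = U *v (diagm p *v (R *v x)) - Uh *v (diagm q *v x)"
          unfolding B_def Bh_def by (simp add: matrix_vector_mult_diff_rdistrib matrix_vector_mul_assoc matrix_mul_assoc)
        also have "\<dots> = U *v (diagm p *v ((R - H) *v x) + Z *v x) - Yf (diagm q *v x)"
          unfolding Zv Ydec[of "diagm q *v x"]
          by (simp add: matrix_vector_mult_diff_rdistrib matrix_vector_mult_diff_distrib
              matrix_vector_right_distrib algebra_simps)
        finally show ?thesis .
      qed
      hence "norm ((B - Bh) *v x) \<le> norm (U *v (diagm p *v ((R - H) *v x) + Z *v x)) + norm (Yf (diagm q *v x))"
        by (simp add: norm_triangle_ineq4)
      also have "norm (U *v (diagm p *v ((R - H) *v x) + Z *v x)) = norm (diagm p *v ((R - H) *v x) + Z *v x)"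
        by (rule isometry_norm[OF UtU])
      also have "\<dots> \<le> norm (diagm p *v ((R - H) *v x)) + norm (Z *v x)" by (rule norm_triangle_ineq)
      also have "norm (diagm p *v ((R - H) *v x)) \<le> sm * norm ((R - H) *v x)" by (rule diagm_bound[OF ple])
      also have "\<dots> \<le> sm * (\<delta>^2 * norm x)" using RHx rsm rpos by (intro mult_left_mono) auto
      finally show ?thesis using Zx[of x] Yscale[OF qY, of x] by (simp add: algebra_simps)
    qed
    hence "spec_norm (B - Bh) \<le> sm * \<delta>^2 + \<epsilon> / r + \<epsilon> * (1 / t)" by (rule spec_le)
    thus ?thesis using K3 by linarith
  qed
  show ?thesis
    unfolding Let_def DM DhM DP DhP
    using orthR bound1 bound2 bound3
    unfolding W_def Wh_def B_def Bh_def \<sigma>_def \<epsilon>_def sm_def by blast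
qed

end
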